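(* For $\mathcal O\subseteq\mathbb F$, the family $\mathrm{UP}(\mathcal O)\setminus\mathrm{EX}(\mathcal O)$ is the set of the cores of the minimal elements of $\mathcal O$.
   Context: Fix a type $\sigma$; $\sigma$-structures are finite sets with an $r$-ary relation for each relation symbol of arity $r$, homomorphisms are relation-preserving maps, $\mathbf A\to\mathbf B$ means one exists. $\mathbb F$ is the set of isomorphism classes of $\sigma$-forests (structures whose incidence multigraph — bipartite with parts the vertices and the blocks $(R,(x_1,\dots,x_r))$, $(x_1,\dots,x_r)\in R(\mathbf A)$, an edge from $x_i$ to the block for each $i$ — has no cycles or parallel edges). The core of $\mathbf A$ is a homomorphically equivalent structure with the minimum number of vertices (unique up to isomorphism). $\mathbf A$ is minimal in $\mathcal O$ if $\mathbf A\in\mathcal O$ and for all $\mathbf C\in\mathcal O$ with $\mathbf C\to\mathbf A$ we have $\mathbf A\to\mathbf C$. A homomorphism $h:\mathbf A\to\mathbf B$ is a retraction if there is a homomorphism $g:\mathbf B\to\mathbf A$ with $h\circ g=\mathrm{id}_{\mathbf B}$, otherwise a non-retraction. $\mathrm{UP}(\mathcal O)=\{\mathbf A\in\mathbb F:\exists\mathbf T\in\mathcal O,\ \mathbf T\to\mathbf A\}$ and $\mathrm{EX}(\mathcal O)=\{\mathbf A\in\mathbb F:\exists\mathbf T\in\mathcal O$ and a non-retraction $h:\mathbf T\to\mathbf A\}$. *)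

theory Defs
  imports Main
begin

text \<open>Signature: relation symbols are the elements of a finite type 'r, with arity ar.
A sigma-structure on vertex type 'a: a universe and, for every symbol R, a set of tuples (lists).\<close>

record ('a, 'r) struc =
  univ :: "'a set"
  rels :: "'r \<Rightarrow> 'a list set"

definition wf_struc :: "('r \<Rightarrow> nat) \<Rightarrow> ('a, 'r) struc \<Rightarrow> bool" where
  "wf_struc ar A \<longleftrightarrow> finite (univ A) \<and>
     (\<forall>R. \<forall>t \<in> rels A R. length t = ar R \<and> set t \<subseteq> univ A)"

definition is_hom :: "('a, 'r) struc \<Rightarrow> ('a, 'r) struc \<Rightarrow> ('a \<Rightarrow> 'a) \<Rightarrow> bool" where
  "is_hom A B h \<longleftrightarrow> (\<forall>x \<in> univ A. h x \<in> univ B) \<and>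
     (\<forall>R. \<forall>t \<in> rels A R. map h t \<in> rels B R)"

definition hom_to :: "('a, 'r) struc \<Rightarrow> ('a, 'r) struc \<Rightarrow> bool" where
  "hom_to A B \<longleftrightarrow> (\<exists>h. is_hom A B h)"

definition hom_equiv :: "('a, 'r) struc \<Rightarrow> ('a, 'r) struc \<Rightarrow> bool" where
  "hom_equiv A B \<longleftrightarrow> hom_to A B \<and> hom_to B A"

definition is_retraction :: "('a, 'r) struc \<Rightarrow> ('a, 'r) struc \<Rightarrow> ('a \<Rightarrow> 'a) \<Rightarrow> bool" where
  "is_retraction A B h \<longleftrightarrow> is_hom A B h \<and> (\<exists>g. is_hom B A g \<and> (\<forall>x \<in> univ B. h (g x) = x))"

text \<open>Incidence graph: vertices Inl x (elements) and Inr (R,t) (blocks); x adjacent to block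
(R,t) iff x occurs in t. Parallel edges arise exactly when a tuple has a repeated entry.\<close>
definition inc_adj :: "('a, 'r) struc \<Rightarrow> ('a + ('r \<times> 'a list)) \<Rightarrow> ('a + ('r \<times> 'a list)) \<Rightarrow> bool" where
  "inc_adj A u v \<longleftrightarrow> (\<exists>x R t. t \<in> rels A R \<and> x \<in> set t \<and>
      ((u = Inl x \<and> v = Inr (R, t)) \<or> (u = Inr (R, t) \<and> v = Inl x)))"

definition inc_has_cycle :: "('a, 'r) struc \<Rightarrow> bool" where
  "inc_has_cycle A \<longleftrightarrow> (\<exists>cs. length cs \<ge> 3 \<and> distinct cs \<and>
      (\<forall>i < length cs. inc_adj A (cs ! i) (cs ! ((i + 1) mod length cs))))"

definition is_forest :: "('r \<Rightarrow> nat) \<Rightarrow> ('a, 'r) struc \<Rightarrow> bool" where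
  "is_forest ar A \<longleftrightarrow> wf_struc ar A \<and> (\<forall>R. \<forall>t \<in> rels A R. distinct t) \<and> \<not> inc_has_cycle A"

definition is_core_of :: "('r \<Rightarrow> nat) \<Rightarrow> ('a, 'r) struc \<Rightarrow> ('a, 'r) struc \<Rightarrow> bool" where
  "is_core_of ar B A \<longleftrightarrow> wf_struc ar B \<and> hom_equiv B A \<and>
     (\<forall>C. wf_struc ar C \<and> hom_equiv C A \<longrightarrow> card (univ B) \<le> card (univ C))"

definition minimal_in :: "('a, 'r) struc set \<Rightarrow> ('a, 'r) struc \<Rightarrow> bool" where
  "minimal_in Obs A \<longleftrightarrow> A \<in> Obs \<and> (\<forall>C \<in> Obs. hom_to C A \<longrightarrow> hom_to A C)"

definition UPC :: "('r \<Rightarrow> nat) \<Rightarrow> ('a, 'r) struc set \<Rightarrow> ('a, 'r) struc set" where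
  "UPC ar Obs = {A. is_forest ar A \<and> (\<exists>T \<in> Obs. hom_to T A)}"

definition EXC :: "('r \<Rightarrow> nat) \<Rightarrow> ('a, 'r) struc set \<Rightarrow> ('a, 'r) struc set" where
  "EXC ar Obs = {A. is_forest ar A \<and> (\<exists>T \<in> Obs. \<exists>h. is_hom T A h \<and> \<not> is_retraction T A h)}"

end

theory Submission
  imports Defs
begin

lemma hom_comp:
  assumes f: "is_hom A B f" and g: "is_hom B C g"
  shows "is_hom A C (g \<circ> f)"
  unfolding is_hom_def
proof (intro conjI allI ballI)
  fix x assume "x \<in> univ A"
  thus "(g \<circ> f) x \<in> univ C" using f g unfolding is_hom_def by simp
next
  fix R t assume "t \<in> rels A R"
  hence "map g (map f t) \<in> rels C R" using f g unfolding is_hom_def by blast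
  thus "map (g \<circ> f) t \<in> rels C R" by simp
qed

lemma hom_id: "is_hom A A id"
  unfolding is_hom_def by simp

lemma hom_to_trans: "hom_to A B \<Longrightarrow> hom_to B C \<Longrightarrow> hom_to A C"
  unfolding hom_to_def using hom_comp by blast

lemma core_endo_inj:
  assumes c: "is_core_of ar B A" and e: "is_hom B B e"
  shows "inj_on e (univ B)"
proof (rule ccontr)
  assume ni: "\<not> inj_on e (univ B)"
  have wfB: "wf_struc ar B" using c unfolding is_core_of_def by blast
  hence finB: "finite (univ B)" unfolding wf_struc_def by blast
  define C where "C = \<lparr>univ = e ` univ B, rels = (\<lambda>R. map e ` rels B R)\<rparr>"
  have wfC: "wf_struc ar C"
    using wfB e unfolding C_def wf_struc_def is_hom_def by auto
  have h1: "is_hom B C e" unfolding C_def is_hom_def by auto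
  have h2: "is_hom C B id" using e unfolding C_def is_hom_def by auto
  have "hom_equiv B A" using c unfolding is_core_of_def by blast
  hence "hom_equiv C A" using h1 h2 unfolding hom_equiv_def
    by (meson hom_to_def hom_to_trans)
  hence le: "card (univ B) \<le> card (univ C)" using c wfC unfolding is_core_of_def by blast
  have "card (univ C) \<le> card (univ B)" unfolding C_def by (simp add: card_image_le finB)
  hence "card (e ` univ B) = card (univ B)" using le unfolding C_def by simp
  thus False using ni finB by (simp add: inj_on_iff_eq_card)
qed

lemma fin_rels:
  assumes "wf_struc ar B" shows "finite (rels B R)"
proof -
  have "finite {xs. set xs \<subseteq> univ B \<and> length xs = ar R}"
    using assms finite_lists_length_eq unfolding wf_struc_def by blast
  moreover have "rels B R \<subseteq> {xs. set xs \<subseteq> univ B \<and> length xs = ar R}"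
    using assms unfolding wf_struc_def by blast
  ultimately show ?thesis by (rule finite_subset[rotated])
qed

lemma inv_endo:
  assumes wf: "wf_struc ar B" and e: "is_hom B B e" and inj: "inj_on e (univ B)"
  shows "\<exists>g. is_hom B B g \<and> (\<forall>x \<in> univ B. e (g x) = x)"
proof -
  have finB: "finite (univ B)" using wf unfolding wf_struc_def by blast
  have sub: "e ` univ B \<subseteq> univ B" using e unfolding is_hom_def by blast
  have surj: "e ` univ B = univ B" using endo_inj_surj[OF finB sub inj] .
  define g where "g = inv_into (univ B) e"
  have gx: "\<forall>x \<in> univ B. e (g x) = x \<and> g x \<in> univ B"
  proof
    fix x assume x: "x \<in> univ B"
    hence xi: "x \<in> e ` univ B" using surj by simp
    show "e (g x) = x \<and> g x \<in> univ B" unfolding g_def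
      using f_inv_into_f[OF xi] inv_into_into[OF xi] by simp
  qed
  have "\<forall>R. \<forall>t \<in> rels B R. map g t \<in> rels B R"
  proof (intro allI ballI)
    fix R t assume t: "t \<in> rels B R"
    have injm: "inj_on (map e) (rels B R)"
    proof (rule inj_onI)
      fix s s' assume "s \<in> rels B R" "s' \<in> rels B R" "map e s = map e s'"
      moreover have "set s \<union> set s' \<subseteq> univ B" using \<open>s \<in> rels B R\<close> \<open>s' \<in> rels B R\<close> wf
        unfolding wf_struc_def by blast
      moreover have "inj_on e (set s \<union> set s')" using inj_on_subset[OF inj] calculation(4) .
      ultimately show "s = s'" using inj_on_map_eq_map by blast
    qed
    have "map e ` rels B R \<subseteq> rels B R" using e unfolding is_hom_def by blast
    hence "map e ` rels B R = rels B R" using endo_inj_surj[OF fin_rels[OF wf] _ injm] by blast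
    then obtain s where s: "s \<in> rels B R" "t = map e s" using t by (metis imageE)
    have ss: "set s \<subseteq> univ B" using s wf unfolding wf_struc_def by blast
    have "map g t = s" unfolding s(2) map_map
    proof (rule map_idI)
      fix x assume "x \<in> set s"
      hence "x \<in> univ B" using ss by blast
      thus "(g \<circ> e) x = x" unfolding g_def comp_def using inv_into_f_f[OF inj] by blast
    qed
    thus "map g t \<in> rels B R" using s by simp
  qed
  hence "is_hom B B g" using gx unfolding is_hom_def by blast
  thus ?thesis using gx by blast
qed


lemma inj_hom_forest:
  fixes A B :: "('a, 'r) struc"
  assumes fA: "is_forest ar A" and wfB: "wf_struc ar B" and k: "is_hom B A k"
    and inj: "inj_on k (univ B)"
  shows "is_forest ar B"
proof -
  have d: "\<forall>R. \<forall>t \<in> rels B R. distinct t"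
  proof (intro allI ballI)
    fix R t assume "t \<in> rels B R"
    hence "map k t \<in> rels A R" using k unfolding is_hom_def by blast
    hence "distinct (map k t)" using fA unfolding is_forest_def by blast
    thus "distinct t" by (simp add: distinct_map)
  qed
  define \<phi> where "\<phi> = map_sum k (\<lambda>(R::'r, t). (R, map k t))"
  define V where "V = Inl ` univ B \<union> {Inr (R, t) | R t. t \<in> rels B R}"
  have adjV: "inc_adj B u v \<Longrightarrow> u \<in> V" for u v
    using wfB unfolding inc_adj_def V_def wf_struc_def by blast
  have adjA: "inc_adj B u v \<Longrightarrow> inc_adj A (\<phi> u) (\<phi> v)" for u v
  proof -
    assume "inc_adj B u v"
    then obtain x R t where t: "t \<in> rels B R" "x \<in> set t"
      "(u = Inl x \<and> v = Inr (R, t)) \<or> (u = Inr (R, t) \<and> v = Inl x)"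
      unfolding inc_adj_def by blast
    have "map k t \<in> rels A R" using t k unfolding is_hom_def by blast
    moreover have "k x \<in> set (map k t)" using t by simp
    ultimately show ?thesis using t(3) unfolding inc_adj_def \<phi>_def by auto
  qed
  have injphi: "inj_on \<phi> V"
  proof (rule inj_onI)
    fix u v assume u: "u \<in> V" and v: "v \<in> V" and eq: "\<phi> u = \<phi> v"
    show "u = v"
    proof (cases u)
      case (Inl x)
      then obtain y where y: "v = Inl y" using eq unfolding \<phi>_def by (cases v) auto
      have "x \<in> univ B" "y \<in> univ B" using u v Inl y unfolding V_def by auto
      thus ?thesis using eq Inl y inj unfolding \<phi>_def by (auto dest: inj_onD)
    next
      case (Inr p)
      then obtain R t where p: "u = Inr (R, t)" "t \<in> rels B R" using u unfolding V_def by auto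
      then obtain q where q: "v = Inr q" using eq unfolding \<phi>_def by (cases v) auto
      then obtain R' t' where q': "v = Inr (R', t')" "t' \<in> rels B R'" using v unfolding V_def by auto
      have RR: "R = R'" and mm: "map k t = map k t'" using eq p q' unfolding \<phi>_def by auto
      have "set t \<union> set t' \<subseteq> univ B" using p q' wfB unfolding wf_struc_def by blast
      hence "inj_on k (set t \<union> set t')" using inj_on_subset[OF inj] by blast
      hence "t = t'" using mm inj_on_map_eq_map by blast
      thus ?thesis using p q' RR by simp
    qed
  qed
  have "\<not> inc_has_cycle B"
  proof
    assume "inc_has_cycle B"
    then obtain cs where cs: "length cs \<ge> 3" "distinct cs"
      "\<forall>i < length cs. inc_adj B (cs ! i) (cs ! ((i + 1) mod length cs))"
      unfolding inc_has_cycle_def by blast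
    have sV: "set cs \<subseteq> V"
    proof
      fix u assume "u \<in> set cs"
      then obtain i where "i < length cs" "u = cs ! i" by (metis in_set_conv_nth)
      thus "u \<in> V" using cs(3) adjV by blast
    qed
    have "length (map \<phi> cs) \<ge> 3" using cs by simp
    moreover have "distinct (map \<phi> cs)" using cs(2) injphi sV
      by (simp add: distinct_map inj_on_subset)
    moreover have "\<forall>i < length (map \<phi> cs). inc_adj A (map \<phi> cs ! i)
        (map \<phi> cs ! ((i + 1) mod length (map \<phi> cs)))"
    proof (intro allI impI)
      fix i assume i: "i < length (map \<phi> cs)"
      have j: "(i + 1) mod length cs < length cs" using cs(1) by (intro mod_less_divisor) linarith
      have i': "i < length cs" using i by simp
      have "inc_adj B (cs ! i) (cs ! ((i + 1) mod length cs))" using cs(3) i' by blast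
      hence "inc_adj A (\<phi> (cs ! i)) (\<phi> (cs ! ((i + 1) mod length cs)))" by (rule adjA)
      thus "inc_adj A (map \<phi> cs ! i) (map \<phi> cs ! ((i + 1) mod length (map \<phi> cs)))"
        by (simp only: length_map nth_map[OF i'] nth_map[OF j])
    qed
    ultimately have "inc_has_cycle A" unfolding inc_has_cycle_def by (intro exI[of _ "map \<phi> cs"] conjI)
    thus False using fA unfolding is_forest_def by blast
  qed
  thus ?thesis using d wfB unfolding is_forest_def by blast
qed

theorem proposition6p2:
  fixes ar :: "'r::finite \<Rightarrow> nat" and Obs :: "('a, 'r) struc set"
  assumes "Obs \<subseteq> {A. is_forest ar A}"
  shows "UPC ar Obs - EXC ar Obs = {B. \<exists>A. minimal_in Obs A \<and> is_core_of ar B A}"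
proof (intro equalityI subsetI)
  fix B assume B: "B \<in> UPC ar Obs - EXC ar Obs"
  hence fB: "is_forest ar B" and wfB: "wf_struc ar B" unfolding UPC_def is_forest_def by auto
  have finB: "finite (univ B)" using wfB unfolding wf_struc_def by blast
  have ret: "\<And>T h. T \<in> Obs \<Longrightarrow> is_hom T B h \<Longrightarrow> is_retraction T B h"
    using B fB unfolding EXC_def by blast
  obtain T h where T: "T \<in> Obs" "is_hom T B h" using B unfolding UPC_def hom_to_def by blast
  obtain g where g: "is_hom B T g" using ret[OF T] unfolding is_retraction_def by blast
  have minT: "minimal_in Obs T"
    unfolding minimal_in_def
  proof (intro conjI ballI impI)
    show "T \<in> Obs" by fact
    fix C assume C: "C \<in> Obs" "hom_to C T"
    then obtain f where f: "is_hom C T f" unfolding hom_to_def by blast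
    have "is_hom C B (h \<circ> f)" using hom_comp f T(2) .
    then obtain g2 where "is_hom B C g2" using ret[OF C(1)] unfolding is_retraction_def by blast
    thus "hom_to T C" using hom_comp[OF T(2)] unfolding hom_to_def by blast
  qed
  have heq: "hom_equiv B T" using g T unfolding hom_equiv_def hom_to_def by blast
  have "is_core_of ar B T" unfolding is_core_of_def
  proof (intro conjI allI impI)
    show "wf_struc ar B" by fact
    show "hom_equiv B T" by fact
    fix C assume C: "wf_struc ar C \<and> hom_equiv C T"
    show "card (univ B) \<le> card (univ C)"
    proof (rule ccontr)
      assume lt: "\<not> card (univ B) \<le> card (univ C)"
      obtain p where p: "is_hom B C p" using C heq hom_to_trans unfolding hom_equiv_def hom_to_def
        by meson
      obtain q where q: "is_hom C B q" using C heq hom_to_trans unfolding hom_equiv_def hom_to_def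
        by meson
      have "p ` univ B \<subseteq> univ C" using p unfolding is_hom_def by blast
      hence "card (p ` univ B) \<le> card (univ C)" using C unfolding wf_struc_def by (simp add: card_mono)
      hence ni: "\<not> inj_on p (univ B)" using lt finB by (simp add: inj_on_iff_eq_card)
      define e where "e = q \<circ> p"
      have eh: "is_hom B B e" unfolding e_def using hom_comp[OF p q] .
      have "\<not> inj_on e (univ B)" unfolding e_def using ni inj_on_imageI2 by blast
      hence ns: "card (e ` univ B) \<noteq> card (univ B)" using finB by (simp add: inj_on_iff_eq_card)
      have "is_hom T B (e \<circ> h)" using hom_comp[OF T(2) eh] .
      then obtain g3 where g3: "\<forall>x \<in> univ B. (e \<circ> h) (g3 x) = x" "is_hom B T g3"
        using ret[OF T(1)] unfolding is_retraction_def by blast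
      have "\<forall>x \<in> univ B. h (g3 x) \<in> univ B" using g3(2) T(2) unfolding is_hom_def by blast
      hence "univ B \<subseteq> e ` univ B" using g3(1) by (metis comp_apply image_eqI subsetI)
      moreover have "e ` univ B \<subseteq> univ B" using eh unfolding is_hom_def by blast
      ultimately show False using ns by auto
    qed
  qed
  thus "B \<in> {B. \<exists>A. minimal_in Obs A \<and> is_core_of ar B A}" using minT by blast
next
  fix B assume "B \<in> {B. \<exists>A. minimal_in Obs A \<and> is_core_of ar B A}"
  then obtain A where mA: "minimal_in Obs A" and c: "is_core_of ar B A" by blast
  have AO: "A \<in> Obs" using mA unfolding minimal_in_def by blast
  hence fA: "is_forest ar A" using assms by blast
  have wfB: "wf_struc ar B" using c unfolding is_core_of_def by blast
  obtain k where k: "is_hom B A k" using c unfolding is_core_of_def hom_equiv_def hom_to_def by blast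
  obtain f where f: "is_hom A B f" using c unfolding is_core_of_def hom_equiv_def hom_to_def by blast
  have "inj_on (f \<circ> k) (univ B)" using core_endo_inj[OF c hom_comp[OF k f]] .
  hence "inj_on k (univ B)" using inj_on_imageI2 by blast
  hence fB: "is_forest ar B" using inj_hom_forest[OF fA wfB k] by blast
  have up: "B \<in> UPC ar Obs" unfolding UPC_def hom_to_def using fB AO f by blast
  have "B \<notin> EXC ar Obs"
  proof
    assume "B \<in> EXC ar Obs"
    then obtain T h where T: "T \<in> Obs" "is_hom T B h" "\<not> is_retraction T B h"
      unfolding EXC_def by blast
    have "hom_to T A" using hom_comp[OF T(2) k] unfolding hom_to_def by blast
    then obtain r where r: "is_hom A T r" using mA T(1) unfolding minimal_in_def hom_to_def by blast
    define p where "p = r \<circ> k"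
    have p: "is_hom B T p" unfolding p_def using hom_comp[OF k r] .
    have eh: "is_hom B B (h \<circ> p)" using hom_comp[OF p T(2)] .
    obtain g' where g': "is_hom B B g'" "\<forall>x \<in> univ B. (h \<circ> p) (g' x) = x"
      using inv_endo[OF wfB eh core_endo_inj[OF c eh]] by blast
    have "is_hom B T (p \<circ> g')" using hom_comp[OF g'(1) p] .
    moreover have "\<forall>x \<in> univ B. h ((p \<circ> g') x) = x" using g'(2) by simp
    ultimately have "is_retraction T B h" using T(2) unfolding is_retraction_def by blast
    thus False using T(3) by blast
  qed
  thus "B \<in> UPC ar Obs - EXC ar Obs" using up by blast
qed

end
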